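(* Let $0 \leq r < 1$. Define $\delta_k \in \{0,1\}$ for $k \geq 1$ inductively by $\delta_k = 1$ if $\frac{\sum_{i=1}^{k-1} 2i\delta_i + 2k}{k(k+1)} \leq r$, and $\delta_k = 0$ otherwise. For $k \geq 1$ let $w^{\langle k \rangle}$ be the word consisting of $2k$ copies of the letter $1 - \delta_k$, and let $w = w^{\langle 1 \rangle} w^{\langle 2 \rangle} w^{\langle 3 \rangle} \cdots$ (infinite concatenation). Then $\lim_{n \to \infty} |Z(w^{(n)})|/n = r$.
   Context: $w^{(n)}$ denotes the initial subword of length $n$ of $w$, and $Z(u)$ is the set of indices $i$ with $u_i = 0$. *)

theory Defs
  imports "HOL-Analysis.Analysis"
begin

text \<open>delta_k = 1 iff (sum_{i=1}^{k-1} 2 i delta_i + 2k)/(k(k+1)) <= r (for k >= 1).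
  To avoid recursion through a sum, we recurse on the partial sums
  dsum r k = sum_{i=1}^{k} 2 i delta_i.\<close>

fun dsum :: "real \<Rightarrow> nat \<Rightarrow> real" where
  "dsum r 0 = 0"
| "dsum r (Suc k) = dsum r k +
     (if (dsum r k + 2 * real (Suc k)) / (real (Suc k) * real (Suc k + 1)) \<le> r
      then 2 * real (Suc k) else 0)"

definition delta :: "real \<Rightarrow> nat \<Rightarrow> nat" where
  "delta r k = (if (dsum r (k - 1) + 2 * real k) / (real k * real (k + 1)) \<le> r then 1 else 0)"

text \<open>Infinite word w = w<1> w<2> w<3> ..., positions 0-indexed; the block
  w<k> (2k copies of 1 - delta_k) occupies positions k(k-1) .. k(k+1)-1.\<close>

definition block_of :: "nat \<Rightarrow> nat" where
  "block_of p = (LEAST k. p < k * (k + 1))"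

definition word :: "real \<Rightarrow> nat \<Rightarrow> nat" where
  "word r p = 1 - delta r (block_of p)"

definition zeros_prefix :: "(nat \<Rightarrow> nat) \<Rightarrow> nat \<Rightarrow> nat" where
  "zeros_prefix w n = card {i. i < n \<and> w i = 0}"

end

theory Submission
  imports Defs "HOL-Real_Asymp.Real_Asymp"
begin

lemma Zsuc: "zeros_prefix w (Suc n) = zeros_prefix w n + (if w n = 0 then 1 else 0)"
proof -
  have "{i. i < Suc n \<and> w i = 0} = {i. i < n \<and> w i = 0} \<union> (if w n = 0 then {n} else {})"
    by (auto simp: less_Suc_eq)
  moreover have "finite {i. i < n \<and> w i = 0}" by simp
  ultimately show ?thesis unfolding zeros_prefix_def by (auto simp: card_insert_if)
qed

lemma block: assumes "k*(k+1) \<le> p" "p < (k+1)*(k+2)" shows "block_of p = Suc k"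
  unfolding block_of_def
proof (rule Least_equality)
  show "p < Suc k * (Suc k + 1)" using assms(2) by simp
next
  fix m assume m: "p < m * (m + 1)"
  show "Suc k \<le> m"
  proof (rule ccontr)
    assume "\<not> Suc k \<le> m"
    hence "m \<le> k" by simp
    hence "m*(m+1) \<le> k*(k+1)" by (intro mult_le_mono) auto
    thus False using m assms(1) by simp
  qed
qed

lemma delta01: "delta r k = 0 \<or> delta r k = 1"
  by (simp add: delta_def)

lemma dsum_suc: "dsum r (Suc k) = dsum r k + 2 * real (Suc k) * real (delta r (Suc k))"
  by (simp add: delta_def)

lemma Zinner:
  assumes base: "real (zeros_prefix (word r) (k*(k+1))) = dsum r k"
  shows "j \<le> 2*(k+1) \<Longrightarrow> real (zeros_prefix (word r) (k*(k+1) + j)) = dsum r k + real j * real (delta r (Suc k))"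
proof (induction j)
  case 0 then show ?case using base by simp
next
  case (Suc j)
  have b: "block_of (k*(k+1) + j) = Suc k"
    by (rule block) (use Suc.prems in \<open>auto simp: algebra_simps\<close>)
  have "zeros_prefix (word r) (k*(k+1) + Suc j) = zeros_prefix (word r) (k*(k+1) + j)
     + (if word r (k*(k+1)+j) = 0 then 1 else 0)" by (simp add: Zsuc)
  moreover have w: "word r (k*(k+1)+j) = 1 - delta r (Suc k)" by (simp only: word_def b)
  moreover have "(if word r (k*(k+1)+j) = 0 then 1 else 0) = delta r (Suc k)"
    using delta01[of r "Suc k"] unfolding w by auto
  ultimately show ?case using Suc by (simp add: algebra_simps)
qed

lemma Zbase: "real (zeros_prefix (word r) (k*(k+1))) = dsum r k"
proof (induction k)
  case 0 then show ?case by (simp add: zeros_prefix_def)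
next
  case (Suc k)
  have e: "Suc k * (Suc k + 1) = k*(k+1) + 2*(k+1)" by (simp add: algebra_simps)
  have "real (zeros_prefix (word r) (k*(k+1) + 2*(k+1))) = dsum r k + real (2*(k+1)) * real (delta r (Suc k))"
    by (rule Zinner[OF Suc]) simp
  then show ?case unfolding e dsum_suc by simp
qed

lemma ebound: "0 \<le> r \<Longrightarrow> r < 1 \<Longrightarrow> dsum r k \<le> r * real k * (real k + 1) \<and> r * real k * (real k + 1) - dsum r k \<le> 2 * real k"
proof (induction k)
  case 0 then show ?case by simp
next
  case (Suc k)
  let ?c = "(dsum r k + 2 * real (Suc k)) / (real (Suc k) * real (Suc k + 1)) \<le> r"
  have pos: "real (Suc k) * real (Suc k + 1) > 0" by simp
  have ceq: "?c \<longleftrightarrow> dsum r k + 2 * real (Suc k) \<le> r * (real (Suc k) * real (Suc k + 1))"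
    using pos by (simp add: divide_le_eq mult.commute)
  have rk: "r * (real k + 1) \<le> real k + 1" using Suc.prems by (simp add: mult_le_cancel_right1)
  have rk0: "0 \<le> r * (real k + 1)" using Suc.prems by simp
  have ex: "r * (real k + 1) * (real k + 2) = r * real k * (real k + 1) + 2 * (r * (real k + 1))"
    by (simp add: algebra_simps)
  show ?case
  proof (cases ?c)
    case True
    then show ?thesis using Suc ceq rk ex by (simp add: algebra_simps) 
  next
    case False
    have d: "dsum r (Suc k) = dsum r k" using False by simp
    have "dsum r k + 2 * real (Suc k) > r * (real (Suc k) * real (Suc k + 1))" using False ceq by simp
    moreover have "r * (real (Suc k) * real (Suc k + 1)) = r * real k * (real k + 1) + 2 * (r * (real k + 1))"
      using ex by (simp add: algebra_simps)
    moreover have q: "r * real (Suc k) * (real (Suc k) + 1) = r * real k * (real k + 1) + 2 * (r * (real k + 1))"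
      by (simp add: algebra_simps)
    ultimately have gt: "r * real k * (real k + 1) + 2 * (r * (real k + 1)) < dsum r k + 2 * real (Suc k)" by simp
    have ih: "dsum r k \<le> r * real k * (real k + 1)" "r * real k * (real k + 1) - dsum r k \<le> 2 * real k"
      using Suc.IH[OF Suc.prems] by auto
    show ?thesis unfolding d q using ih rk0 gt by (intro conjI) linarith+
  qed
qed

lemma exk: fixes n :: nat shows "\<exists>k. k*(k+1) \<le> n \<and> n < (k+1)*(k+2)"
proof (induction n)
  case 0 show ?case by (rule exI[of _ 0]) simp
next
  case (Suc n)
  then obtain k where k: "k*(k+1) \<le> n" "n < (k+1)*(k+2)" by blast
  show ?case
  proof (cases "Suc n < (k+1)*(k+2)")
    case True then show ?thesis using k by (intro exI[of _ k]) simp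
  next
    case False
    hence "Suc n = (k+1)*(k+2)" using k by simp
    then show ?thesis by (intro exI[of _ "k+1"]) (simp add: algebra_simps)
  qed
qed

lemma aux: fixes D A X R j k s :: real
  shows "D \<le> A \<Longrightarrow> A - D \<le> 2*k \<Longrightarrow> 0 \<le> X \<Longrightarrow> X \<le> j \<Longrightarrow> 0 \<le> R \<Longrightarrow> R \<le> j
   \<Longrightarrow> j \<le> 2*(k+1) \<Longrightarrow> k \<le> s \<Longrightarrow> 0 \<le> s \<Longrightarrow> 0 \<le> k \<Longrightarrow> \<bar>D + X - (A + R)\<bar> \<le> 4*(s+1)"
  by (simp add: abs_le_iff)

lemma Zbound:
  assumes r: "0 \<le> r" "r < 1"
  shows "\<bar>real (zeros_prefix (word r) n) - r * real n\<bar> \<le> 4 * (sqrt (real n) + 1)"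
proof -
  obtain k where k: "k*(k+1) \<le> n" "n < (k+1)*(k+2)" using exk by blast
  define j where "j = n - k*(k+1)"
  have nj: "n = k*(k+1) + j" using k j_def by simp
  have j2: "j \<le> 2*(k+1)" using k j_def by (simp add: algebra_simps)
  have Z: "real (zeros_prefix (word r) n) = dsum r k + real j * real (delta r (Suc k))"
    unfolding nj by (rule Zinner[OF Zbase j2])
  have e: "dsum r k \<le> r * real k * (real k + 1)" "r * real k * (real k + 1) - dsum r k \<le> 2 * real k"
    using ebound[OF r] by auto
  have rn: "r * real n = r * real k * (real k + 1) + r * real j"
    unfolding nj by (simp add: algebra_simps)
  have jd: "0 \<le> real j * real (delta r (Suc k))" "real j * real (delta r (Suc k)) \<le> real j"
    using delta01[of r "Suc k"] by auto
  have rj: "0 \<le> r * real j" "r * real j \<le> real j" using r by (auto intro: mult_left_le_one_le)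
  have jr: "real j \<le> 2 * (real k + 1)" proof -
    have "real j \<le> real (2*(k+1))" using j2 by (simp only: of_nat_le_iff)
    thus ?thesis by simp
  qed
  have "k*k \<le> n" using k(1) by (simp add: algebra_simps)
  hence "real (k*k) \<le> real n" by (simp only: of_nat_le_iff)
  hence "sqrt (real (k*k)) \<le> sqrt (real n)" by (rule real_sqrt_le_mono)
  hence ks: "real k \<le> sqrt (real n)" by simp
  have s0: "0 \<le> sqrt (real n)" by simp
  have k0: "0 \<le> real k" by simp
  show ?thesis unfolding Z rn using aux[OF e jd rj jr ks s0 k0] .
qed

theorem lemma4p16:
  fixes r :: real
  assumes "0 \<le> r" and "r < 1"
  shows "(\<lambda>n. real (zeros_prefix (word r) n) / real n) \<longlonglongrightarrow> r"
proof -
  have g: "(\<lambda>n::nat. 4 * (sqrt (real n) + 1) / real n) \<longlonglongrightarrow> 0" by real_asymp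
  have "(\<lambda>n. real (zeros_prefix (word r) n) / real n - r) \<longlonglongrightarrow> 0"
  proof (rule Lim_null_comparison[OF _ g])
    show "\<forall>\<^sub>F n in sequentially. norm (real (zeros_prefix (word r) n) / real n - r) \<le> 4 * (sqrt (real n) + 1) / real n"
    proof (rule eventually_sequentiallyI[of 1])
      fix n :: nat assume "1 \<le> n"
      hence np: "real n > 0" by simp
      have "real (zeros_prefix (word r) n) / real n - r = (real (zeros_prefix (word r) n) - r * real n) / real n"
        using np by (simp add: field_simps)
      hence "norm (real (zeros_prefix (word r) n) / real n - r) = \<bar>real (zeros_prefix (word r) n) - r * real n\<bar> / real n"
        using np by simp
      also have "\<dots> \<le> 4 * (sqrt (real n) + 1) / real n"
        using Zbound[OF assms, of n] np by (simp add: divide_right_mono)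
      finally show "norm (real (zeros_prefix (word r) n) / real n - r) \<le> 4 * (sqrt (real n) + 1) / real n" .
    qed
  qed
  thus ?thesis by (simp add: LIM_zero_iff)
qed

end
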